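(* Let $G=(V,E)$ be a finite simple connected graph with diameter $d$. Suppose there exist integers $n_1,\dots,n_d\ge 1$ with $\sum_{i=1}^d n_i=|V|-1$ such that for every vertex $v\in V$ and every $1\le i\le d$, exactly $n_i$ vertices are at distance $i$ from $v$. Then for any rank assignment $f:V\to\mathbb{R}$ under which all vertices have distinct strings, and any real numbers $k\neq 0$ and $b$, the rank assignment $v\mapsto kf(v)+b$ also gives all vertices distinct strings. Furthermore, if additionally $IDI(G)=2$, then $G$ is an ID-graph.
   Context: For a graph $G=(V,E)$ with diameter $d$, a rank assignment is a function $f:V\to\mathbb{R}$; under $f$, the string of a vertex $v$ is the $d$-vector whose $i$-th coordinate is the sum of $f(w)$ over all vertices $w$ with $d(v,w)=i$. The ID-index $IDI(G)$ is the minimum $k$ such that there exists $f:V\to\mathbb{R}$ with $|f(V)|=k$ under which all vertices have distinct strings. A red-white coloring of $G$ assigns red or white to each vertex with at least one vertex red; the code of a vertex $v$ is the $d$-vector whose $i$-th coordinate is the number of red vertices at distance $i$ from $v$. A red-white coloring in which all vertices have distinct codes is an ID-coloring, and $G$ is an ID-graph if it has an ID-coloring. *)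

theory Defs
  imports Complex_Main
begin

definition simple_graph :: "'a set \<Rightarrow> ('a \<Rightarrow> 'a \<Rightarrow> bool) \<Rightarrow> bool" where
  "simple_graph V E \<longleftrightarrow> finite V \<and> (\<forall>v w. E v w \<longrightarrow> v \<in> V \<and> w \<in> V)
     \<and> (\<forall>v w. E v w \<longrightarrow> E w v) \<and> (\<forall>v. \<not> E v v)"

definition walk_len :: "'a set \<Rightarrow> ('a \<Rightarrow> 'a \<Rightarrow> bool) \<Rightarrow> 'a \<Rightarrow> 'a \<Rightarrow> nat \<Rightarrow> bool" where
  "walk_len V E v w n \<longleftrightarrow> (\<exists>xs. length xs = Suc n \<and> hd xs = v \<and> last xs = w
     \<and> set xs \<subseteq> V \<and> (\<forall>i < n. E (xs ! i) (xs ! Suc i)))"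

definition connected_graph :: "'a set \<Rightarrow> ('a \<Rightarrow> 'a \<Rightarrow> bool) \<Rightarrow> bool" where
  "connected_graph V E \<longleftrightarrow> V \<noteq> {} \<and> (\<forall>v\<in>V. \<forall>w\<in>V. \<exists>n. walk_len V E v w n)"

definition gdist :: "'a set \<Rightarrow> ('a \<Rightarrow> 'a \<Rightarrow> bool) \<Rightarrow> 'a \<Rightarrow> 'a \<Rightarrow> nat" where
  "gdist V E v w = (LEAST n. walk_len V E v w n)"

definition diameter :: "'a set \<Rightarrow> ('a \<Rightarrow> 'a \<Rightarrow> bool) \<Rightarrow> nat" where
  "diameter V E = Max {gdist V E v w | v w. v \<in> V \<and> w \<in> V}"

text \<open>String of v under rank assignment f: the d-vector, encoded as a function on
  indices, with value 0 outside {1..d}.\<close>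
definition rank_string :: "'a set \<Rightarrow> ('a \<Rightarrow> 'a \<Rightarrow> bool) \<Rightarrow> ('a \<Rightarrow> real) \<Rightarrow> 'a \<Rightarrow> nat \<Rightarrow> real" where
  "rank_string V E f v = (\<lambda>i. if 1 \<le> i \<and> i \<le> diameter V E
      then (\<Sum>w\<in>{w\<in>V. gdist V E v w = i}. f w) else 0)"

definition distinct_strings :: "'a set \<Rightarrow> ('a \<Rightarrow> 'a \<Rightarrow> bool) \<Rightarrow> ('a \<Rightarrow> real) \<Rightarrow> bool" where
  "distinct_strings V E f \<longleftrightarrow> inj_on (rank_string V E f) V"

definition IDI :: "'a set \<Rightarrow> ('a \<Rightarrow> 'a \<Rightarrow> bool) \<Rightarrow> nat" where
  "IDI V E = (LEAST k. \<exists>f. card (f ` V) = k \<and> distinct_strings V E f)"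

text \<open>Red-white colouring given by the set R of red vertices (nonempty).\<close>
definition code :: "'a set \<Rightarrow> ('a \<Rightarrow> 'a \<Rightarrow> bool) \<Rightarrow> 'a set \<Rightarrow> 'a \<Rightarrow> nat \<Rightarrow> nat" where
  "code V E R v = (\<lambda>i. if 1 \<le> i \<and> i \<le> diameter V E
      then card {w\<in>V. w \<in> R \<and> gdist V E v w = i} else 0)"

definition ID_coloring :: "'a set \<Rightarrow> ('a \<Rightarrow> 'a \<Rightarrow> bool) \<Rightarrow> 'a set \<Rightarrow> bool" where
  "ID_coloring V E R \<longleftrightarrow> R \<subseteq> V \<and> R \<noteq> {} \<and> inj_on (code V E R) V"

definition ID_graph :: "'a set \<Rightarrow> ('a \<Rightarrow> 'a \<Rightarrow> bool) \<Rightarrow> bool" where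
  "ID_graph V E \<longleftrightarrow> (\<exists>R. ID_coloring V E R)"

end

theory Submission
  imports Defs "HOL-Library.Nat_Bijection"
begin

lemma gdist_self:
  assumes "v \<in> V" shows "gdist V E v v = 0"
proof -
  have "walk_len V E v v 0" unfolding walk_len_def
    by (rule exI[of _ "[v]"]) (use assms in auto)
  then show ?thesis unfolding gdist_def by simp
qed

lemma gdist_pos:
  assumes "connected_graph V E" "v \<in> V" "w \<in> V" "v \<noteq> w" shows "gdist V E v w \<noteq> 0"
proof
  assume g0: "gdist V E v w = 0"
  have ex: "\<exists>n. walk_len V E v w n" using assms unfolding connected_graph_def by auto
  then have "walk_len V E v w 0" using LeastI_ex[OF ex] g0
    unfolding gdist_def by simp
  then obtain xs where "length xs = 1" "hd xs = v" "last xs = w"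
    unfolding walk_len_def by auto
  then show False using assms by (cases xs) auto
qed

lemma gdist_le_diam:
  assumes "finite V" "v \<in> V" "w \<in> V" shows "gdist V E v w \<le> diameter V E"
proof -
  have "finite {gdist V E v w | v w. v \<in> V \<and> w \<in> V}"
  proof -
    have "{gdist V E v w | v w. v \<in> V \<and> w \<in> V} = (\<lambda>(v,w). gdist V E v w) ` (V \<times> V)" by auto
    then show ?thesis using assms by simp
  qed
  then show ?thesis unfolding diameter_def using assms by (intro Max_ge) auto
qed

lemma affine_part:
  assumes fin: "finite V"
    and lev: "\<forall>v\<in>V. \<forall>i\<in>{1..diameter V E}. card {w\<in>V. gdist V E v w = i} = n i"
    and k: "(k::real) \<noteq> 0" and ds: "distinct_strings V E f"
  shows "distinct_strings V E (\<lambda>v. k * f v + b)"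
  unfolding distinct_strings_def
proof (rule inj_onI)
  fix x y assume x: "x \<in> V" and y: "y \<in> V"
    and eq: "rank_string V E (\<lambda>v. k * f v + b) x = rank_string V E (\<lambda>v. k * f v + b) y"
  have "rank_string V E f x = rank_string V E f y"
  proof
    fix i
    show "rank_string V E f x i = rank_string V E f y i"
    proof (cases "1 \<le> i \<and> i \<le> diameter V E")
      case True
      have h: "rank_string V E (\<lambda>v. k * f v + b) z i = k * rank_string V E f z i + b * n i"
        if "z \<in> V" for z
      proof -
        have "finite {w\<in>V. gdist V E z w = i}" using fin by simp
        then have "(\<Sum>w\<in>{w\<in>V. gdist V E z w = i}. k * f w + b)
             = k * (\<Sum>w\<in>{w\<in>V. gdist V E z w = i}. f w) + b * card {w\<in>V. gdist V E z w = i}"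
          by (simp add: sum.distrib sum_distrib_left)
        also have "card {w\<in>V. gdist V E z w = i} = n i" using lev that True by auto
        finally show ?thesis unfolding rank_string_def using True by simp
      qed
      have "k * rank_string V E f x i + b * n i = k * rank_string V E f y i + b * n i"
        using h[OF x] h[OF y] eq by metis
      then show ?thesis using k by simp
    next
      case False
      then have c: "\<not> (1 \<le> i \<and> i \<le> diameter V E)" .
      show ?thesis unfolding rank_string_def by (simp only: if_not_P[OF c])
    qed
  qed
  then show "x = y" using ds x y unfolding distinct_strings_def inj_on_def by blast
qed

lemma exists_distinct:
  assumes fin: "finite V" and con: "connected_graph V E"
  shows "\<exists>f. distinct_strings V E f"
proof -
  obtain h :: "'a \<Rightarrow> nat" where h: "inj_on h V"
    using finite_imp_inj_to_nat_seg[OF fin] by blast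
  define f :: "'a \<Rightarrow> real" where "f w = 2 ^ h w" for w
  have enc: "(\<Sum>w\<in>A. f w) = real (set_encode (h ` A))" if "A \<subseteq> V" for A
  proof -
    have ih: "inj_on h A" using h that inj_on_subset by blast
    have "real (set_encode (h ` A)) = (\<Sum>j\<in>h ` A. 2 ^ j)"
      unfolding set_encode_def by simp
    also have "\<dots> = (\<Sum>w\<in>A. 2 ^ h w)" using sum.reindex[OF ih] by simp
    finally show ?thesis unfolding f_def by simp
  qed
  have "distinct_strings V E f"
    unfolding distinct_strings_def
  proof (rule inj_onI, rule ccontr)
    fix x y assume x: "x \<in> V" and y: "y \<in> V"
      and eq: "rank_string V E f x = rank_string V E f y" and ne: "x \<noteq> y"
    define i where "i = gdist V E x y"
    have i1: "1 \<le> i" using gdist_pos[OF con x y ne] unfolding i_def by simp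
    have i2: "i \<le> diameter V E" using gdist_le_diam[OF fin x y] unfolding i_def by simp
    let ?A = "{w\<in>V. gdist V E x w = i}" and ?B = "{w\<in>V. gdist V E y w = i}"
    have "(\<Sum>w\<in>?A. f w) = (\<Sum>w\<in>?B. f w)"
      using fun_cong[OF eq, of i] i1 i2 unfolding rank_string_def by simp
    then have "set_encode (h ` ?A) = set_encode (h ` ?B)"
      using enc[of ?A] enc[of ?B] by simp
    then have "h ` ?A = h ` ?B" using fin by (simp add: set_encode_eq)
    then have "?A = ?B" using inj_on_image_eq_iff[OF h] by blast
    moreover have "y \<in> ?A" using y i_def by simp
    ultimately have "gdist V E y y = i" by blast
    then show False using gdist_self[OF y] i1 by simp
  qed
  then show ?thesis by blast
qed

theorem mainTheorem4:
  fixes V :: "'a set" and E :: "'a \<Rightarrow> 'a \<Rightarrow> bool" and n :: "nat \<Rightarrow> nat"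
  assumes "simple_graph V E" and "connected_graph V E"
    and "\<forall>i\<in>{1..diameter V E}. n i \<ge> 1"
    and "(\<Sum>i=1..diameter V E. n i) = card V - 1"
    and "\<forall>v\<in>V. \<forall>i\<in>{1..diameter V E}. card {w\<in>V. gdist V E v w = i} = n i"
  shows "(\<forall>(f :: 'a \<Rightarrow> real) (k :: real) (b :: real). k \<noteq> 0 \<longrightarrow> distinct_strings V E f
            \<longrightarrow> distinct_strings V E (\<lambda>v. k * f v + b))
         \<and> (IDI V E = 2 \<longrightarrow> ID_graph V E)"
proof -
  have fin: "finite V" using assms(1) unfolding simple_graph_def by simp
  have P1: "\<forall>(f :: 'a \<Rightarrow> real) (k :: real) (b :: real). k \<noteq> 0 \<longrightarrow> distinct_strings V E f
            \<longrightarrow> distinct_strings V E (\<lambda>v. k * f v + b)"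
    using affine_part[OF fin assms(5)] by blast
  have P2: "ID_graph V E" if I2: "IDI V E = 2"
  proof -
    obtain f0 where f0: "distinct_strings V E f0" using exists_distinct[OF fin assms(2)] by blast
    have ex: "\<exists>k f. card (f ` V) = k \<and> distinct_strings V E f" using f0 by blast
    obtain f where cf: "card (f ` V) = 2" and df: "distinct_strings V E f"
      using LeastI_ex[OF ex] I2 unfolding IDI_def by auto
    obtain a c where ac: "f ` V = {a, c}" "a \<noteq> c"
      using cf card_2_iff[of "f ` V"] by blast
    define R where "R = {v\<in>V. f v = c}"
    have "c \<in> f ` V" using ac by simp
    then have Rne: "R \<noteq> {}" unfolding R_def by blast
    define g where "g v = (1 / (c - a)) * f v + (- a / (c - a))" for v
    have dg: "distinct_strings V E g"
      using affine_part[OF fin assms(5), of "1 / (c - a)" f "- a / (c - a)"] ac df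
      unfolding g_def by simp
    have gv: "g v = (if v \<in> R then 1 else 0)" if "v \<in> V" for v
    proof -
      have ca: "c - a \<noteq> 0" using ac by simp
      have "f v = a \<or> f v = c" using ac that by blast
      then show ?thesis
      proof
        assume "f v = a" then show ?thesis using ac ca unfolding g_def R_def
          by (simp add: divide_simps)
      next
        assume "f v = c" then show ?thesis using ca that unfolding g_def R_def
          by (simp add: divide_simps)
      qed
    qed
    have rs: "rank_string V E g v = (\<lambda>i. real (code V E R v i))" for v
    proof
      fix i
      have "(\<Sum>w\<in>{w\<in>V. gdist V E v w = i}. g w)
           = (\<Sum>w\<in>{w\<in>V. gdist V E v w = i}. (if w \<in> R then 1 else 0))"
        using gv by (intro sum.cong) auto
      also have "\<dots> = real (card ({w\<in>V. gdist V E v w = i} \<inter> R))"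
        using fin by (simp add: sum.If_cases)
      also have "{w\<in>V. gdist V E v w = i} \<inter> R = {w\<in>V. w \<in> R \<and> gdist V E v w = i}" by auto
      finally show "rank_string V E g v i = real (code V E R v i)"
        unfolding rank_string_def code_def by simp
    qed
    have "inj_on (code V E R) V"
    proof (rule inj_onI)
      fix x y assume "x \<in> V" "y \<in> V" "code V E R x = code V E R y"
      then have "rank_string V E g x = rank_string V E g y" using rs by simp
      then show "x = y" using dg \<open>x \<in> V\<close> \<open>y \<in> V\<close> unfolding distinct_strings_def inj_on_def by blast
    qed
    moreover have "R \<subseteq> V" unfolding R_def by blast
    ultimately have "ID_coloring V E R" unfolding ID_coloring_def using Rne by blast
    then show ?thesis unfolding ID_graph_def by blast
  qed
  show ?thesis using P1 P2 by blast
qed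

end
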